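(* For every integer $n\ge 0$ and every integer $j$ with $0\le j\le n/3$, the number $f(n,j)$ of partitions of $n$ whose parts of even index sum to $j$ equals $$\sum_{i=0}^{j} p(i)\,p(j-i),$$ where $p$ is the partition function. (This is the $(j+1)$-st term of Sloane's sequence A000712, the number of ordered pairs $(\alpha,\beta)$ of integer partitions with $|\alpha|+|\beta|=j$.) Moreover, the bound $n/3$ is best possible: for every integer $j$ with $n/3<j\le n/2$, $f(n,j)<\sum_{i=0}^{j}p(i)p(j-i)$.
   Context: A partition $\lambda$ of $n$ is written $n=a_1+a_2+\dots+a_k$ with $a_1\ge a_2\ge\dots\ge a_k\ge1$. The parts of even index are $a_2,a_4,a_6,\dots$ and the parts of odd index are $a_1,a_3,\dots$. $f(n,j)$ denotes the number of partitions of $n$ with $a_2+a_4+a_6+\dots=j$. $p(i)$ is the number of partitions of $i$, with $p(0)=1$. *)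

theory Defs
  imports Main
begin

definition partitions :: "nat \<Rightarrow> nat list set" where
  "partitions n = {xs. sorted_wrt (\<ge>) xs \<and> (\<forall>x\<in>set xs. 1 \<le> x) \<and> sum_list xs = n}"

definition part_count :: "nat \<Rightarrow> nat" where
  "part_count i = card (partitions i)"

text \<open>Sum of parts of even index a_2 + a_4 + ...; with 0-based list positions these are
  the positions 1, 3, 5, ...\<close>
definition even_index_sum :: "nat list \<Rightarrow> nat" where
  "even_index_sum xs = (\<Sum>i<length xs. if odd i then xs ! i else 0)"

definition f :: "nat \<Rightarrow> nat \<Rightarrow> nat" where
  "f n j = card {xs \<in> partitions n. even_index_sum xs = j}"

end

theory Submission imports Defs begin

definition PF :: "nat \<Rightarrow> nat \<Rightarrow> (nat \<Rightarrow> nat) set" where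
  "PF M s = {a. (\<forall>i. a (Suc i) \<le> a i) \<and> (\<forall>i\<ge>M. a i = 0) \<and> (\<Sum>i<M. a i) = s}"

definition Lf :: "nat list \<Rightarrow> nat \<Rightarrow> nat" where
  "Lf xs = (\<lambda>i. if i < length xs then xs ! i else 0)"

lemma finite_partitions: "finite (partitions s)"
proof -
  have "partitions s \<subseteq> {xs. set xs \<subseteq> {..s} \<and> length xs \<le> s}"
  proof
    fix xs assume "xs \<in> partitions s"
    hence h: "\<forall>x\<in>set xs. 1 \<le> x" "sum_list xs = s" by (auto simp: partitions_def)
    have "set xs \<subseteq> {..s}" using h member_le_sum_list by fastforce
    moreover have "length xs \<le> sum_list xs"
      using h(1) by (induction xs) auto
    ultimately show "xs \<in> {xs. set xs \<subseteq> {..s} \<and> length xs \<le> s}" using h by auto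
  qed
  thus ?thesis using finite_lists_length_le[of "{..s}" s] finite_subset by blast
qed

lemma len_le: "xs \<in> partitions s \<Longrightarrow> length xs \<le> s"
proof -
  assume "xs \<in> partitions s"
  hence h: "\<forall>x\<in>set xs. 1 \<le> x" "sum_list xs = s" by (auto simp: partitions_def)
  have "length xs \<le> sum_list xs" using h(1) by (induction xs) auto
  thus ?thesis using h by simp
qed

lemma sum_Lf: "length xs \<le> M \<Longrightarrow> (\<Sum>i<M. Lf xs i) = sum_list xs"
proof -
  assume "length xs \<le> M"
  hence "(\<Sum>i<M. Lf xs i) = (\<Sum>i<length xs. Lf xs i)"
    by (intro sum.mono_neutral_right) (auto simp: Lf_def)
  also have "\<dots> = (\<Sum>i<length xs. xs ! i)" by (simp add: Lf_def)
  also have "\<dots> = sum_list xs" by (simp add: sum_list_sum_nth lessThan_atLeast0)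
  finally show ?thesis .
qed

lemma Lf_bij: "s \<le> M \<Longrightarrow> bij_betw Lf (partitions s) (PF M s)"
  unfolding bij_betw_def
proof (intro conjI)
  assume sM: "s \<le> M"
  show "inj_on Lf (partitions s)"
  proof (rule inj_onI)
    fix xs ys assume xs: "xs \<in> partitions s" and ys: "ys \<in> partitions s" and e: "Lf xs = Lf ys"
    have px: "\<forall>x\<in>set xs. 1 \<le> x" and py: "\<forall>x\<in>set ys. 1 \<le> x" using xs ys by (auto simp: partitions_def)
    have "length xs = length ys"
    proof (rule ccontr)
      assume "length xs \<noteq> length ys"
      then consider "length xs < length ys" | "length ys < length xs" by linarith
      thus False
      proof cases
        case 1
        have "Lf ys (length xs) = ys ! length xs" using 1 by (simp add: Lf_def)
        moreover have "ys ! length xs \<ge> 1" using py 1 by auto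
        moreover have "Lf xs (length xs) = 0" by (simp add: Lf_def)
        ultimately show False using e by simp
      next
        case 2
        have "Lf xs (length ys) = xs ! length ys" using 2 by (simp add: Lf_def)
        moreover have "xs ! length ys \<ge> 1" using px 2 by auto
        moreover have "Lf ys (length ys) = 0" by (simp add: Lf_def)
        ultimately show False using e by simp
      qed
    qed
    moreover have "\<And>i. i < length xs \<Longrightarrow> xs ! i = ys ! i"
      using e \<open>length xs = length ys\<close> by (metis Lf_def)
    ultimately show "xs = ys" by (rule nth_equalityI)
  qed
  show "Lf ` partitions s = PF M s"
  proof
    show "Lf ` partitions s \<subseteq> PF M s"
    proof
      fix a assume "a \<in> Lf ` partitions s"
      then obtain xs where xs: "xs \<in> partitions s" and a: "a = Lf xs" by auto
      have srt: "sorted_wrt (\<ge>) xs" and sl: "sum_list xs = s" using xs by (auto simp: partitions_def)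
      have ln: "length xs \<le> M" using len_le[OF xs] sM by simp
      have "a (Suc i) \<le> a i" for i
        using srt by (auto simp: a Lf_def sorted_wrt_iff_nth_less)
      moreover have "\<forall>i\<ge>M. a i = 0" using ln by (auto simp: a Lf_def)
      moreover have "(\<Sum>i<M. a i) = s" using sum_Lf[OF ln] sl a by simp
      ultimately show "a \<in> PF M s" by (simp add: PF_def)
    qed
    show "PF M s \<subseteq> Lf ` partitions s"
    proof
      fix a assume "a \<in> PF M s"
      hence mono: "\<And>i. a (Suc i) \<le> a i" and sup: "\<And>i. i \<ge> M \<Longrightarrow> a i = 0" and sm: "(\<Sum>i<M. a i) = s"
        by (auto simp: PF_def)
      have dec: "antimono a" using mono by (simp add: antimono_iff_le_Suc)
      define k where "k = (LEAST i. a i = 0)"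
      have ak: "a k = 0" unfolding k_def by (rule LeastI[of _ M]) (simp add: sup)
      have kM: "k \<le> M" unfolding k_def by (rule Least_le) (simp add: sup)
      have pos: "i < k \<Longrightarrow> a i \<noteq> 0" for i unfolding k_def using not_less_Least by blast
      have zero: "i \<ge> k \<Longrightarrow> a i = 0" for i using dec ak by (metis antimonoD le_zero_eq)
      define xs where "xs = map a [0..<k]"
      have Lx: "Lf xs = a" using zero by (auto simp: Lf_def xs_def)
      have "sorted_wrt (\<ge>) xs" unfolding xs_def sorted_wrt_iff_nth_less
        using dec by (auto simp: antimonoD)
      moreover have "\<forall>x\<in>set xs. 1 \<le> x" using pos by (auto simp: xs_def Suc_le_eq)
      moreover have "sum_list xs = s"
        using sum_Lf[of xs M] kM sm Lx by (simp add: xs_def)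
      ultimately have "xs \<in> partitions s" by (simp add: partitions_def)
      thus "a \<in> Lf ` partitions s" using Lx by blast
    qed
  qed
qed


lemma T_exists:
  fixes a :: "nat \<Rightarrow> nat"
  shows "(\<forall>i. a (Suc i) \<le> a i) \<Longrightarrow> (\<forall>i\<ge>N. a i = 0) \<Longrightarrow>
   \<exists>T. (\<forall>i. a i = T i + T (Suc i)) \<and> (\<forall>i. T (Suc (Suc i)) \<le> T i) \<and> (\<forall>i\<ge>N. T i = 0)"
proof (induction N arbitrary: a)
  case 0
  thus ?case by (intro exI[of _ "\<lambda>_. 0"]) auto
next
  case (Suc N)
  have "\<forall>i. (a \<circ> Suc) (Suc i) \<le> (a \<circ> Suc) i" "\<forall>i\<ge>N. (a \<circ> Suc) i = 0" using Suc.prems by auto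
  from Suc.IH[OF this] obtain T' where
    T1: "\<forall>i. a (Suc i) = T' i + T' (Suc i)" and T2: "\<forall>i. T' (Suc (Suc i)) \<le> T' i"
    and T3: "\<forall>i\<ge>N. T' i = 0" by auto
  have a10: "a 1 \<le> a 0" using Suc.prems by (metis One_nat_def)
  have t0: "T' 0 + T' 1 = a 1" using T1 by (metis One_nat_def)
  define T where "T i = (case i of 0 \<Rightarrow> a 0 - T' 0 | Suc m \<Rightarrow> T' m)" for i
  have "\<forall>i. a i = T i + T (Suc i)"
  proof
    fix i show "a i = T i + T (Suc i)"
      using T1 a10 t0 by (cases i) (auto simp: T_def)
  qed
  moreover have "\<forall>i. T (Suc (Suc i)) \<le> T i"
  proof
    fix i show "T (Suc (Suc i)) \<le> T i"
      using T2 a10 t0 by (cases i) (auto simp: T_def)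
  qed
  moreover have "\<forall>i\<ge>Suc N. T i = 0"
    using T3 by (auto simp: T_def split: nat.splits)
  ultimately show ?case by blast
qed

lemma T_unique:
  fixes T T' :: "nat \<Rightarrow> nat"
  assumes "\<forall>i\<ge>N. T i = 0" "\<forall>i\<ge>N. T' i = 0" "\<forall>i. T i + T (Suc i) = T' i + T' (Suc i)"
  shows "T = T'"
proof -
  have "T (N - k) = T' (N - k)" for k
  proof (induction k)
    case 0 thus ?case using assms by simp
  next
    case (Suc k)
    show ?case
    proof (cases "k < N")
      case True
      hence e: "N - k = Suc (N - Suc k)" by simp
      from assms(3)[rule_format, of "N - Suc k"] Suc.IH e show ?thesis by simp
    next
      case False
      hence "N - Suc k = N - k" by simp
      thus ?thesis using Suc.IH by simp
    qed
  qed
  hence "T i = T' i" for i using assms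
    by (cases "i \<ge> N") (auto, metis diff_diff_cancel less_imp_le_nat not_le)
  thus ?thesis by auto
qed

lemma split_sum: "(\<Sum>i<2*(M::nat)+1. (g i::nat)) = g 0 + (\<Sum>k<M. g (2*k+1) + g (2*k+2))"
  by (induction M) (auto simp: ac_simps)

lemma shift_sum: "(T::nat\<Rightarrow>nat) N = 0 \<Longrightarrow> (\<Sum>i<N. T i + T (Suc i)) + T 0 = 2 * (\<Sum>i<N. T i)"
proof -
  assume "T N = 0"
  have "(\<Sum>i<N. T (Suc i)) + T 0 = (\<Sum>i<Suc N. T i)" by (subst sum.lessThan_Suc_shift) simp
  also have "\<dots> = (\<Sum>i<N. T i)" using \<open>T N = 0\<close> by simp
  finally show ?thesis by (simp add: sum.distrib)
qed

lemma odd_sum: "(\<Sum>i<2*(M::nat)+1. if odd i then (a i::nat) else 0) = (\<Sum>k<M. a (2*k+1))"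
  by (subst split_sum) simp


definition mkT :: "nat \<Rightarrow> (nat \<Rightarrow> nat) \<Rightarrow> (nat \<Rightarrow> nat) \<Rightarrow> nat \<Rightarrow> nat" where
  "mkT t al be i = (case i of 0 \<Rightarrow> t | Suc m \<Rightarrow> if even m then al (m div 2) else be (m div 2))"

definition Psi :: "nat \<Rightarrow> (nat \<Rightarrow> nat) \<Rightarrow> (nat \<Rightarrow> nat) \<Rightarrow> nat \<Rightarrow> nat" where
  "Psi t al be = (\<lambda>i. mkT t al be i + mkT t al be (Suc i))"

lemma mkT_0[simp]: "mkT t al be 0 = t" by (simp add: mkT_def)
lemma mkT_odd[simp]: "mkT t al be (2*k+1) = al k" by (simp add: mkT_def)
lemma mkT_even[simp]: "mkT t al be (2*k+2) = be k"
proof -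
  have "2*k+2 = Suc (2*k+1)" by simp
  thus ?thesis by (simp only: mkT_def nat.case) simp
qed

lemma mkT_odd'[simp]: "mkT t al be (Suc (2*k)) = al k" by (simp add: mkT_def)
lemma mkT_even'[simp]: "mkT t al be (Suc (Suc (2*k))) = be k"
  using mkT_even[of t al be k] by simp

lemma mkT_cases:
  fixes i :: nat
  obtains "i = 0" | k where "i = 2*k+1" | k where "i = 2*k+2"
proof (cases i)
  case 0 thus ?thesis using that by simp
next
  case (Suc m)
  show ?thesis
  proof (cases "even m")
    case True
    then obtain k where "m = 2*k" by auto
    thus ?thesis using that Suc by simp
  next
    case False
    then obtain k where "m = 2*k+1" using oddE by blast
    thus ?thesis using that Suc by simp
  qed
qed

definition Cf :: "nat \<Rightarrow> nat \<Rightarrow> ((nat \<Rightarrow> nat) \<times> (nat \<Rightarrow> nat)) set" where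
  "Cf M j = (\<Union>i\<in>{0..j}. PF M i \<times> PF M (j-i))"

definition Cp :: "nat \<Rightarrow> nat \<Rightarrow> nat \<Rightarrow> ((nat \<Rightarrow> nat) \<times> (nat \<Rightarrow> nat)) set" where
  "Cp M j t = {p \<in> Cf M j. snd p 0 \<le> t}"

definition Ap :: "nat \<Rightarrow> nat \<Rightarrow> nat \<Rightarrow> (nat \<Rightarrow> nat) set" where
  "Ap N n j = {a \<in> PF N n. (\<Sum>i<N. if odd i then a i else 0) = j}"

lemma sums_T:
  fixes T :: "nat \<Rightarrow> nat"
  assumes "T (2*M+1) = 0"
  shows "(\<Sum>i<2*M+1. T i + T (Suc i)) = T 0 + 2 * (\<Sum>k<M. T (2*k+1) + T (2*k+2))"
    and "(\<Sum>i<2*M+1. if odd i then T i + T (Suc i) else 0) = (\<Sum>k<M. T (2*k+1) + T (2*k+2))"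
proof -
  have "(\<Sum>i<2*M+1. T i + T (Suc i)) + T 0 = 2 * (\<Sum>i<2*M+1. T i)"
    by (rule shift_sum[of T "2*M+1", OF assms])
  also have "\<dots> = 2 * (T 0 + (\<Sum>k<M. T (2*k+1) + T (2*k+2)))" by (simp only: split_sum)
  finally show "(\<Sum>i<2*M+1. T i + T (Suc i)) = T 0 + 2 * (\<Sum>k<M. T (2*k+1) + T (2*k+2))" by simp
  show "(\<Sum>i<2*M+1. if odd i then T i + T (Suc i) else 0) = (\<Sum>k<M. T (2*k+1) + T (2*k+2))"
    by (subst odd_sum) (simp add: numeral_2_eq_2)
qed

lemma main_bij:
  assumes "2*j \<le> n"
  shows "bij_betw (\<lambda>(al,be). Psi (n-2*j) al be) (Cp M j (n-2*j)) (Ap (2*M+1) n j)"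
  unfolding bij_betw_def
proof (intro conjI)
  let ?t = "n - 2*j"
  let ?N = "2*M+1"
  have supT: "mkT t al be i = 0" if "i \<ge> ?N" "\<forall>k\<ge>M. al k = 0" "\<forall>k\<ge>M. be k = 0" for t al be i
    using that by (cases i rule: mkT_cases) auto
  show "inj_on (\<lambda>(al,be). Psi ?t al be) (Cp M j ?t)"
  proof (rule inj_onI, clarify)
    fix al be al' be'
    assume a1: "(al, be) \<in> Cp M j ?t" and a2: "(al', be') \<in> Cp M j ?t" and e: "Psi ?t al be = Psi ?t al' be'"
    have s1: "\<forall>k\<ge>M. al k = 0" "\<forall>k\<ge>M. be k = 0" using a1 by (auto simp: Cp_def Cf_def PF_def)
    have s2: "\<forall>k\<ge>M. al' k = 0" "\<forall>k\<ge>M. be' k = 0" using a2 by (auto simp: Cp_def Cf_def PF_def)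
    have "mkT ?t al be = mkT ?t al' be'"
    proof (rule T_unique[of ?N])
      show "\<forall>i\<ge>?N. mkT ?t al be i = 0" using supT s1 by blast
      show "\<forall>i\<ge>?N. mkT ?t al' be' i = 0" using supT s2 by blast
      show "\<forall>i. mkT ?t al be i + mkT ?t al be (Suc i) = mkT ?t al' be' i + mkT ?t al' be' (Suc i)"
        using e unfolding Psi_def by meson
    qed
    hence "al k = al' k \<and> be k = be' k" for k
      by (metis mkT_odd mkT_even)
    thus "al = al' \<and> be = be'" by auto
  qed
  show "(\<lambda>(al,be). Psi ?t al be) ` Cp M j ?t = Ap ?N n j"
  proof
    show "(\<lambda>(al,be). Psi ?t al be) ` Cp M j ?t \<subseteq> Ap ?N n j"
    proof clarify
      fix al be assume "(al, be) \<in> Cp M j ?t"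
      then obtain i where i: "i \<le> j" and al: "al \<in> PF M i" and be: "be \<in> PF M (j-i)" and b0: "be 0 \<le> ?t"
        by (auto simp: Cp_def Cf_def)
      have ma: "\<And>k. al (Suc k) \<le> al k" and sa: "\<forall>k\<ge>M. al k = 0" and suma: "(\<Sum>k<M. al k) = i"
        using al by (auto simp: PF_def)
      have mb: "\<And>k. be (Suc k) \<le> be k" and sb: "\<forall>k\<ge>M. be k = 0" and sumb: "(\<Sum>k<M. be k) = j - i"
        using be by (auto simp: PF_def)
      let ?T = "mkT ?t al be"
      have TN: "?T ?N = 0" using supT sa sb by blast
      note s1 = sums_T(1)[of "?T" M, OF TN] and s2 = sums_T(2)[of "?T" M, OF TN]
      have S: "(\<Sum>k<M. ?T (2*k+1) + ?T (2*k+2)) = j"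
        using suma sumb i by (simp add: sum.distrib)
      have "Psi ?t al be (Suc i') \<le> Psi ?t al be i'" for i'
      proof -
        have "?T (Suc (Suc i')) \<le> ?T i'"
        proof (cases i' rule: mkT_cases)
          case 1 thus ?thesis using b0 mkT_even'[of ?t al be 0] by simp
        next
          case (2 k)
          hence "Suc (Suc i') = 2*(k+1)+1" by simp
          thus ?thesis using 2 ma mkT_odd'[of ?t al be "Suc k"] by simp
        next
          case (3 k)
          hence "Suc (Suc i') = 2*(k+1)+2" by simp
          thus ?thesis using 3 mb mkT_even'[of ?t al be "Suc k"] by simp
        qed
        thus ?thesis by (simp add: Psi_def)
      qed
      moreover have "\<forall>i'\<ge>?N. Psi ?t al be i' = 0"
        using supT sa sb by (simp add: Psi_def)
      moreover have "(\<Sum>i'<?N. Psi ?t al be i') = n"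
        using s1 S assms by (simp add: Psi_def)
      moreover have "(\<Sum>i'<?N. if odd i' then Psi ?t al be i' else 0) = j"
        unfolding Psi_def using s2 S by simp
      ultimately show "Psi ?t al be \<in> Ap ?N n j" by (simp add: Ap_def PF_def)
    qed
    show "Ap ?N n j \<subseteq> (\<lambda>(al,be). Psi ?t al be) ` Cp M j ?t"
    proof
      fix a assume "a \<in> Ap ?N n j"
      hence ma: "\<forall>i. a (Suc i) \<le> a i" and sa: "\<forall>i\<ge>?N. a i = 0" and suma: "(\<Sum>i<?N. a i) = n"
        and oa: "(\<Sum>i<?N. if odd i then a i else 0) = j"
        by (auto simp: Ap_def PF_def)
      obtain T where T1: "\<forall>i. a i = T i + T (Suc i)" and T2: "\<forall>i. T (Suc (Suc i)) \<le> T i"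
        and T3: "\<forall>i\<ge>?N. T i = 0" using T_exists[OF ma sa] by blast
      have aT: "a = (\<lambda>i. T i + T (Suc i))" using T1 by auto
      have TN: "T ?N = 0" using T3 by simp
      define al where "al k = T (2*k+1)" for k
      define be where "be k = T (2*k+2)" for k
      have S: "(\<Sum>k<M. T (2*k+1) + T (2*k+2)) = j" using sums_T(2)[of T M, OF TN] oa unfolding aT by simp
      have n_eq: "n = T 0 + 2*j" using sums_T(1)[of T M, OF TN] suma S unfolding aT by simp
      have al_in: "al \<in> PF M (\<Sum>k<M. al k)"
      proof -
        have "al (Suc k) \<le> al k" for k
          using T2[rule_format, of "2*k+1"] by (simp add: al_def)
        moreover have "\<forall>k\<ge>M. al k = 0" using T3 by (simp add: al_def)
        ultimately show ?thesis by (simp add: PF_def)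
      qed
      have be_in: "be \<in> PF M (j - (\<Sum>k<M. al k))"
      proof -
        have "be (Suc k) \<le> be k" for k
          using T2[rule_format, of "2*k+2"] by (simp add: be_def)
        moreover have "\<forall>k\<ge>M. be k = 0" using T3 by (simp add: be_def)
        moreover have "(\<Sum>k<M. be k) = j - (\<Sum>k<M. al k)"
          using S by (simp add: al_def be_def sum.distrib)
        ultimately show ?thesis by (simp add: PF_def)
      qed
      have ij: "(\<Sum>k<M. al k) \<le> j" using S by (simp add: al_def sum.distrib)
      have b0: "be 0 \<le> ?t" using T2[rule_format, of 0] n_eq by (simp add: be_def numeral_2_eq_2)
      have mk: "mkT ?t al be = T"
      proof
        fix i show "mkT ?t al be i = T i"
          by (cases i rule: mkT_cases) (auto simp: al_def be_def n_eq)
      qed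
      have "(al, be) \<in> Cp M j ?t" using al_in be_in ij b0 by (auto simp: Cp_def Cf_def)
      moreover have "a = Psi ?t al be" using mk aT by (simp add: Psi_def)
      ultimately show "a \<in> (\<lambda>(al,be). Psi ?t al be) ` Cp M j ?t" by force
    qed
  qed
qed


lemma bij_restr: "bij_betw g P Q \<Longrightarrow> bij_betw g {x\<in>P. R (g x)} {y\<in>Q. R y}"
  unfolding bij_betw_def inj_on_def by auto

lemma eis_Lf: "length xs \<le> N \<Longrightarrow> even_index_sum xs = (\<Sum>i<N. if odd i then Lf xs i else 0)"
proof -
  assume "length xs \<le> N"
  hence "(\<Sum>i<N. if odd i then Lf xs i else 0) = (\<Sum>i<length xs. if odd i then Lf xs i else 0)"
    by (intro sum.mono_neutral_right) (auto simp: Lf_def)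
  also have "\<dots> = even_index_sum xs" by (auto intro!: sum.cong simp: even_index_sum_def Lf_def)
  finally show ?thesis by simp
qed

lemma f_card: "n \<le> 2*M+1 \<Longrightarrow> f n j = card (Ap (2*M+1) n j)"
proof -
  assume h: "n \<le> 2*M+1"
  have b: "bij_betw Lf (partitions n) (PF (2*M+1) n)" by (rule Lf_bij[OF h])
  have "{xs \<in> partitions n. even_index_sum xs = j} =
        {xs \<in> partitions n. (\<Sum>i<2*M+1. if odd i then Lf xs i else 0) = j}"
    using eis_Lf len_le h by (metis (no_types, lifting) le_trans)
  hence "f n j = card {xs \<in> partitions n. (\<Sum>i<2*M+1. if odd i then Lf xs i else 0) = j}"
    by (simp add: f_def)
  also have "\<dots> = card (Ap (2*M+1) n j)"
    unfolding Ap_def by (rule bij_betw_same_card[OF bij_restr[OF b]])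
  finally show ?thesis .
qed

lemma PF_card: "s \<le> M \<Longrightarrow> card (PF M s) = part_count s"
  using bij_betw_same_card[OF Lf_bij] by (simp add: part_count_def)

lemma PF_finite: "s \<le> M \<Longrightarrow> finite (PF M s)"
  using bij_betw_finite[OF Lf_bij] finite_partitions by blast

lemma Cf_finite: "j \<le> M \<Longrightarrow> finite (Cf M j)"
  unfolding Cf_def by (auto intro!: finite_cartesian_product PF_finite)

lemma Cf_card: "j \<le> M \<Longrightarrow> card (Cf M j) = (\<Sum>i=0..j. part_count i * part_count (j - i))"
proof -
  assume h: "j \<le> M"
  have "card (Cf M j) = (\<Sum>i=0..j. card (PF M i \<times> PF M (j-i)))"
    unfolding Cf_def
  proof (rule card_UN_disjoint)
    show "finite {0..j}" by simp
    show "\<forall>i\<in>{0..j}. finite (PF M i \<times> PF M (j - i))" using h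
      by (auto intro!: finite_cartesian_product PF_finite)
    show "\<forall>i\<in>{0..j}. \<forall>i'\<in>{0..j}. i \<noteq> i' \<longrightarrow> PF M i \<times> PF M (j - i) \<inter> PF M i' \<times> PF M (j - i') = {}"
      by (auto simp: PF_def)
  qed
  also have "\<dots> = (\<Sum>i=0..j. part_count i * part_count (j - i))"
    using h by (intro sum.cong) (auto simp: card_cartesian_product PF_card)
  finally show ?thesis .
qed

theorem theorem1:
  fixes n j :: nat
  shows "(3 * j \<le> n \<longrightarrow> f n j = (\<Sum>i=0..j. part_count i * part_count (j - i)))
       \<and> (n < 3 * j \<and> 2 * j \<le> n \<longrightarrow> f n j < (\<Sum>i=0..j. part_count i * part_count (j - i)))"
proof -
  let ?M = "n+1"
  have key: "f n j = card (Cp ?M j (n-2*j))" if "2*j \<le> n"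
    using f_card[of n "n+1" j] bij_betw_same_card[OF main_bij[OF that, of ?M]] by simp
  have cf: "card (Cf ?M j) = (\<Sum>i=0..j. part_count i * part_count (j - i))" if "j \<le> n"
    using Cf_card[of j ?M] that by simp
  show ?thesis
  proof (intro conjI impI)
    assume h: "3*j \<le> n"
    have "Cp ?M j (n-2*j) = Cf ?M j"
    proof -
      have "snd p 0 \<le> n - 2*j" if pC: "p \<in> Cf ?M j" for p
      proof -
        obtain al be where p: "p = (al, be)" by force
        obtain i where "be \<in> PF ?M (j-i)" using pC unfolding p Cf_def by blast
        hence "(\<Sum>k<?M. be k) \<le> j" by (simp add: PF_def)
        moreover have "be 0 \<le> (\<Sum>k<?M. be k)"
          by (rule member_le_sum) auto
        ultimately show ?thesis using h p by simp
      qed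
      thus ?thesis by (auto simp: Cp_def)
    qed
    thus "f n j = (\<Sum>i=0..j. part_count i * part_count (j - i))"
      using key cf h by simp
  next
    assume h: "n < 3*j \<and> 2*j \<le> n"
    have sub: "Cp ?M j (n-2*j) \<subseteq> Cf ?M j" by (auto simp: Cp_def)
    define be where "be k = (if k = 0 then j else 0)" for k :: nat
    have "be \<in> PF ?M j" by (auto simp: PF_def be_def)
    moreover have "(\<lambda>_. 0) \<in> PF ?M 0" by (simp add: PF_def)
    ultimately have "((\<lambda>_. 0), be) \<in> Cf ?M j" unfolding Cf_def by force
    moreover have "((\<lambda>_. 0), be) \<notin> Cp ?M j (n-2*j)" using h by (auto simp: Cp_def be_def)
    ultimately have "Cp ?M j (n-2*j) \<subset> Cf ?M j" using sub by blast
    hence "card (Cp ?M j (n-2*j)) < card (Cf ?M j)"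
      using Cf_finite[of j ?M] h by (intro psubset_card_mono) auto
    thus "f n j < (\<Sum>i=0..j. part_count i * part_count (j - i))"
      using key cf h by simp
  qed
qed

end
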